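(* Let $L/K$ be a finite totally ramified separable extension of degree $n>1$ with $\nu=v_p(n)$, let $\pi_K,\pi_L$ be uniformizers of $K,L$, and let $\hat{\mathcal{F}}(X)=\sum_{h\ge0}a_hX^{h+n}$ (with $a_h\in R$) be the unique series with $\hat{\mathcal{F}}(\pi_L)=\pi_K$. Then for every $0\le j\le\nu$ and every real $x\ge0$, \[ \phi_{L/K}^j(x)=\min\left\{h+v_L\left(\binom{h+n}{p^{j_0}}\right)+p^{j_0}x:\ 0\le j_0\le j,\ h\ge0,\ a_h\neq0\right\}. \]
   Context: Let $p$ be a prime and $K$ a field complete with respect to a discrete valuation whose residue field $\overline{K}$ is perfect of characteristic $p$ (the characteristic of $K$ may be $0$ or $p$). Fix a separable closure $K^{sep}$; $v_K$ is the valuation on $K^{sep}$ with $v_K(K^\times)=\mathbb{Z}$, and $R\subset\mathcal{O}_K$ is the set of Teichmüller representatives of $\overline{K}$. $v_p$ denotes the $p$-adic valuation on $\mathbb{Z}$. $L/K$ is a finite totally ramified subextension of $K^{sep}/K$; $v_L$ is the valuation on $K^{sep}$ with $v_L(L^\times)=\mathbb{Z}$ (so $v_L(0)=\infty$, and $v_L(p)=\infty$ if $\operatorname{char}K=p$). For $0\le j\le\nu$ put $\tilde{\imath}_j=\min\{h\ge0: v_p(h+n)\le j,\ a_h\ne0\}$ (or $\infty$ if no such $h$). The indices of inseparability are defined recursively by $i_\nu=0$ and $i_j=\min\{\tilde{\imath}_j,\,i_{j+1}+v_L(p)\}$ for $j=\nu-1,\dots,0$. For $x\in[0,\infty)$ define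 $\tilde{\phi}_{L/K}^j(x)=i_j+p^jx$ and $\phi_{L/K}^j(x)=\min\{\tilde{\phi}_{L/K}^{j_0}(x):0\le j_0\le j\}$. *)

theory Defs
  imports "HOL-Computational_Algebra.Primes" "HOL-Library.Extended_Real"
begin

text \<open>Abstract data of the extension L/K entering the statement:
  p prime, n = [L:K], nu = v_p(n), the coefficient sequence a_h of the series
  F(X) = sum_h a_h X^(h+n), and vLp = v_L(p) (infinite in characteristic p,
  equal to n * v_K(p) in characteristic 0).\<close>

text \<open>v_L of (the image in K of) a natural number m:
  v_L(m) = v_p(m) * v_L(p), with v_L(0) = infinity, and 0 * infinity = 0
  (units have valuation 0 also in characteristic p).\<close>
definition vL_nat :: "nat \<Rightarrow> ereal \<Rightarrow> nat \<Rightarrow> ereal" where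
  "vL_nat p vLp m = (if m = 0 then \<infinity> else ereal (real (multiplicity p m)) * vLp)"

definition itilde :: "nat \<Rightarrow> nat \<Rightarrow> (nat \<Rightarrow> 'a::zero) \<Rightarrow> nat \<Rightarrow> ereal" where
  "itilde p n a j = (INF h \<in> {h. multiplicity p (h + n) \<le> j \<and> a h \<noteq> 0}. ereal (real h))"

text \<open>Downward recursion: ind_aux k = i_(nu - k); i_nu = 0,
  i_j = min (tilde i_j) (i_(j+1) + v_L(p)).\<close>
fun ind_aux :: "nat \<Rightarrow> nat \<Rightarrow> (nat \<Rightarrow> 'a::zero) \<Rightarrow> ereal \<Rightarrow> nat \<Rightarrow> ereal" where
  "ind_aux p n a vLp 0 = 0"
| "ind_aux p n a vLp (Suc k) =
     min (itilde p n a (multiplicity p n - Suc k)) (ind_aux p n a vLp k + vLp)"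

definition insep_index :: "nat \<Rightarrow> nat \<Rightarrow> (nat \<Rightarrow> 'a::zero) \<Rightarrow> ereal \<Rightarrow> nat \<Rightarrow> ereal" where
  "insep_index p n a vLp j = ind_aux p n a vLp (multiplicity p n - j)"

definition phi_j :: "nat \<Rightarrow> nat \<Rightarrow> (nat \<Rightarrow> 'a::zero) \<Rightarrow> ereal \<Rightarrow> nat \<Rightarrow> real \<Rightarrow> ereal" where
  "phi_j p n a vLp j x =
     Min ((\<lambda>j0. insep_index p n a vLp j0 + ereal (real (p ^ j0) * x)) ` {..j})"

end

theory Submission imports Defs begin

lemma mult_sub:
  fixes p m i k :: nat
  assumes p: "prime p" and i: "0 < i" "i < m" and km: "p ^ k dvd m" and ik: "i < p ^ k"
  shows "multiplicity p (m - i) = multiplicity p i"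
proof -
  define s where "s = multiplicity p i"
  have nu: "\<not> is_unit p" using p by auto
  have sk: "s < k"
  proof (rule ccontr)
    assume "\<not> s < k"
    hence "p ^ k dvd i" using multiplicity_dvd'[of k p i] s_def by simp
    hence "p ^ k \<le> i" using i by (simp add: dvd_imp_le)
    thus False using ik by simp
  qed
  have d1: "p ^ s dvd i" unfolding s_def by (rule multiplicity_dvd)
  have d2: "p ^ s dvd m" using km sk by (meson dvd_trans le_imp_power_dvd less_imp_le)
  have a: "p ^ s dvd m - i" using d1 d2 by (simp add: dvd_diff_nat)
  have b: "\<not> p ^ Suc s dvd m - i"
  proof
    assume h: "p ^ Suc s dvd m - i"
    have "p ^ Suc s dvd m" using km sk by (meson dvd_trans le_imp_power_dvd Suc_leI)
    hence "p ^ Suc s dvd m - (m - i)" using h by (simp add: dvd_diff_nat)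
    hence "p ^ Suc s dvd i" using i by simp
    hence "Suc s \<le> multiplicity p i" using multiplicity_geI[of i p "Suc s"] i nu by simp
    thus False using s_def by simp
  qed
  show ?thesis using multiplicity_eqI[OF a b] s_def by simp
qed

lemma binom_unit:
  fixes p m k :: nat
  assumes p: "prime p" and km: "p ^ k dvd m" and m: "p ^ k \<le> m"
  shows "r < p ^ k \<Longrightarrow> multiplicity p ((m - 1) choose r) = 0"
proof (induction r)
  case 0 thus ?case by simp
next
  case (Suc r)
  have nu: "\<not> is_unit p" using p by auto
  have pe: "prime_elem p" using p by simp
  have eq: "Suc r * ((m-1) choose Suc r) = (m - 1 - r) * ((m-1) choose r)"
    using binomial_absorption[of r "m-1"] binomial_absorb_comp[of "m-1" r] by simp
  have ne1: "(m-1) choose Suc r \<noteq> 0" using Suc.prems m by simp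
  have ne2: "(m-1) choose r \<noteq> 0" using Suc.prems m by simp
  have ne3: "m - 1 - r \<noteq> 0" using Suc.prems m by simp
  have "multiplicity p (Suc r * ((m-1) choose Suc r)) = multiplicity p (Suc r) + multiplicity p ((m-1) choose Suc r)"
    by (rule prime_elem_multiplicity_mult_distrib[OF pe _ ne1]) simp
  moreover have "multiplicity p ((m - 1 - r) * ((m-1) choose r)) = multiplicity p (m-1-r) + multiplicity p ((m-1) choose r)"
    using prime_elem_multiplicity_mult_distrib[OF pe ne3 ne2] by simp
  moreover have "m - 1 - r = m - Suc r" by simp
  moreover have "multiplicity p (m - Suc r) = multiplicity p (Suc r)"
    using mult_sub[OF p _ _ km, of "Suc r"] Suc.prems m by simp
  ultimately show ?case using eq Suc by simp
qed

lemma kummer: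
  fixes p m k :: nat
  assumes p: "prime p" and km: "k \<le> multiplicity p m" and m: "m > 0"
  shows "multiplicity p (m choose (p ^ k)) = multiplicity p m - k"
proof -
  have pe: "prime_elem p" using p by simp
  have kd: "p ^ k dvd m" using multiplicity_dvd'[OF km] .
  have pm: "p ^ k \<le> m" using kd m by (simp add: dvd_imp_le)
  have pk: "p ^ k > 0" using p by (simp add: prime_gt_0_nat)
  have eq: "p ^ k * (m choose p ^ k) = m * ((m - 1) choose (p ^ k - 1))"
  proof -
    have "Suc (p^k - 1) = p ^ k" using pk by simp
    thus ?thesis using binomial_absorption[of "p^k - 1" m] by metis
  qed
  have ne1: "m choose p ^ k \<noteq> 0" using pm by simp
  have ne2: "(m - 1) choose (p ^ k - 1) \<noteq> 0" using pm pk by simp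
  have u: "multiplicity p ((m - 1) choose (p ^ k - 1)) = 0"
    using binom_unit[OF p kd pm, of "p^k - 1"] pk by simp
  have "multiplicity p (p ^ k * (m choose p ^ k)) = k + multiplicity p (m choose p ^ k)"
    using prime_elem_multiplicity_mult_distrib[OF pe _ ne1, of "p^k"] pk pe by simp
  moreover have "multiplicity p (m * ((m - 1) choose (p ^ k - 1))) = multiplicity p m"
    using prime_elem_multiplicity_mult_distrib[OF pe _ ne2] m u by simp
  ultimately show ?thesis using eq by simp
qed


lemma M0[simp]: "ereal 0 * (v::ereal) = 0"
  by (cases v) auto

lemma M_Suc: "0 \<le> (v::ereal) \<Longrightarrow> ereal (real (Suc d)) * v = ereal (real d) * v + v"
  by (cases v) (auto simp: algebra_simps)

lemma M_mono: "0 \<le> (v::ereal) \<Longrightarrow> d \<le> d' \<Longrightarrow> ereal (real d) * v \<le> ereal (real d') * v"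
  by (rule ereal_mult_right_mono) auto

lemma M_nn: "0 \<le> (v::ereal) \<Longrightarrow> 0 \<le> ereal (real d) * v"
  by simp

lemma it_nn: "0 \<le> itilde p n a t"
  unfolding itilde_def by (rule INF_greatest) simp

lemma it_le: "multiplicity p (h+n) \<le> t \<Longrightarrow> a h \<noteq> 0 \<Longrightarrow> itilde p n a t \<le> ereal (real h)"
  unfolding itilde_def by (rule INF_lower) simp

lemma it_fin: assumes "itilde p n a t \<noteq> \<infinity>"
  shows "\<exists>h. multiplicity p (h+n) \<le> t \<and> a h \<noteq> 0 \<and> itilde p n a t = ereal (real h)"
proof -
  define S where "S = {h. multiplicity p (h + n) \<le> t \<and> a h \<noteq> 0}"
  have "S \<noteq> {}" using assms unfolding itilde_def S_def[symmetric] by (auto simp: top_ereal_def)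
  then obtain h0 where h0: "h0 \<in> S" by auto
  define h where "h = (LEAST h. h \<in> S)"
  have hS: "h \<in> S" unfolding h_def using h0 by (rule LeastI)
  have "itilde p n a t = ereal (real h)"
  proof (rule antisym)
    show "itilde p n a t \<le> ereal (real h)" using hS unfolding S_def by (intro it_le) auto
    show "ereal (real h) \<le> itilde p n a t" unfolding itilde_def S_def[symmetric]
      by (rule INF_greatest) (simp add: h_def Least_le)
  qed
  thus ?thesis using hS S_def by auto
qed

lemma ind_A:
  assumes v: "0 \<le> vLp"
  shows "k \<le> multiplicity p n \<Longrightarrow> d \<le> k \<Longrightarrow>
    ind_aux p n a vLp k \<le> itilde p n a (multiplicity p n - k + d) + ereal (real d) * vLp"
proof (induction k arbitrary: d)
  case 0
  thus ?case using it_nn[of p n a] v by simp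
next
  case (Suc k)
  show ?case
  proof (cases d)
    case 0
    thus ?thesis by simp
  next
    case (Suc d')
    have "ind_aux p n a vLp (Suc k) \<le> ind_aux p n a vLp k + vLp" by simp
    also have "\<dots> \<le> itilde p n a (multiplicity p n - k + d') + ereal (real d') * vLp + vLp"
      using Suc.IH[of d'] Suc.prems Suc by (intro add_right_mono) auto
    also have "\<dots> = itilde p n a (multiplicity p n - Suc k + d) + ereal (real d) * vLp"
    proof -
      have "multiplicity p n - Suc k + d = multiplicity p n - k + d'" using Suc Suc.prems by simp
      thus ?thesis using Suc M_Suc[OF v, of d'] by (simp only: add.assoc)
    qed
    finally show ?thesis .
  qed
qed

lemma ind_B:
  assumes v: "0 \<le> vLp" and a0: "a 0 \<noteq> 0"
  shows "k \<le> multiplicity p n \<Longrightarrow> ind_aux p n a vLp k = \<infinity> \<or>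
    (\<exists>h d. d \<le> k \<and> a h \<noteq> 0 \<and> multiplicity p (h+n) \<le> multiplicity p n - k + d
       \<and> ereal (real h) + ereal (real d) * vLp \<le> ind_aux p n a vLp k)"
proof (induction k)
  case 0
  show ?case by (rule disjI2, rule exI[of _ 0], rule exI[of _ 0]) (simp add: a0)
next
  case (Suc k)
  show ?case
  proof (cases "itilde p n a (multiplicity p n - Suc k) \<le> ind_aux p n a vLp k + vLp")
    case True
    hence eq: "ind_aux p n a vLp (Suc k) = itilde p n a (multiplicity p n - Suc k)" by simp
    show ?thesis
    proof (cases "itilde p n a (multiplicity p n - Suc k) = \<infinity>")
      case True thus ?thesis using eq by simp
    next
      case False
      then obtain h where h: "multiplicity p (h+n) \<le> multiplicity p n - Suc k" "a h \<noteq> 0"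
        "itilde p n a (multiplicity p n - Suc k) = ereal (real h)" using it_fin by blast
      show ?thesis by (rule disjI2, rule exI[of _ h], rule exI[of _ 0]) (use h eq in simp)
    qed
  next
    case False
    hence eq: "ind_aux p n a vLp (Suc k) = ind_aux p n a vLp k + vLp" by simp
    from Suc.IH Suc.prems have "ind_aux p n a vLp k = \<infinity> \<or>
    (\<exists>h d. d \<le> k \<and> a h \<noteq> 0 \<and> multiplicity p (h+n) \<le> multiplicity p n - k + d
       \<and> ereal (real h) + ereal (real d) * vLp \<le> ind_aux p n a vLp k)" by simp
    thus ?thesis
    proof
      assume "ind_aux p n a vLp k = \<infinity>"
      thus ?thesis using eq v by simp
    next
      assume "\<exists>h d. d \<le> k \<and> a h \<noteq> 0 \<and> multiplicity p (h+n) \<le> multiplicity p n - k + d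
       \<and> ereal (real h) + ereal (real d) * vLp \<le> ind_aux p n a vLp k"
      then obtain h d where hd: "d \<le> k" "a h \<noteq> 0" "multiplicity p (h+n) \<le> multiplicity p n - k + d"
        "ereal (real h) + ereal (real d) * vLp \<le> ind_aux p n a vLp k" by blast
      have "ereal (real h) + ereal (real (Suc d)) * vLp = ereal (real h) + ereal (real d) * vLp + vLp"
        using M_Suc[OF v, of d] by (simp add: add.assoc)
      also have "\<dots> \<le> ind_aux p n a vLp (Suc k)" using hd(4) eq by (simp add: add_right_mono)
      finally have "ereal (real h) + ereal (real (Suc d)) * vLp \<le> ind_aux p n a vLp (Suc k)" .
      moreover have "multiplicity p (h+n) \<le> multiplicity p n - Suc k + Suc d" using hd(3) Suc.prems by simp
      ultimately show ?thesis using hd by (intro disjI2 exI[of _ h] exI[of _ "Suc d"]) auto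
    qed
  qed
qed


lemma vL_nn: "0 \<le> vLp \<Longrightarrow> 0 \<le> vL_nat p vLp m"
  unfolding vL_nat_def by simp

lemma vL_kummer:
  assumes p: "prime p" and j0: "j0 \<le> multiplicity p m" and m: "m > 0"
  shows "vL_nat p vLp (m choose (p ^ j0)) = ereal (real (multiplicity p m - j0)) * vLp"
proof -
  have kd: "p ^ j0 dvd m" using multiplicity_dvd'[OF j0] .
  have pm: "p ^ j0 \<le> m" using kd m by (simp add: dvd_imp_le)
  hence "m choose p ^ j0 \<noteq> 0" by simp
  thus ?thesis unfolding vL_nat_def using kummer[OF p j0 m] by simp
qed

lemma pow_x_mono: "prime (p::nat) \<Longrightarrow> (x::real) \<ge> 0 \<Longrightarrow> s \<le> j0 \<Longrightarrow>
   ereal (real (p ^ s) * x) \<le> ereal (real (p ^ j0) * x)"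
proof -
  assume p: "prime p" "x \<ge> 0" "s \<le> j0"
  have "1 \<le> p" using prime_gt_0_nat[of p] p by linarith
  hence "p ^ s \<le> p ^ j0" using p by (intro power_increasing) auto
  hence "real (p ^ s) \<le> real (p ^ j0)" by linarith
  thus ?thesis using p by (simp add: mult_right_mono)
qed

theorem proposition2p2:
  fixes p n j :: nat and a :: "nat \<Rightarrow> 'a::zero" and vLp :: ereal and x :: real
  assumes "prime p"
    and "n > 1"
    and "a 0 \<noteq> 0"
    and "vLp = \<infinity> \<or> (\<exists>e::nat. e \<ge> 1 \<and> vLp = ereal (real (n * e)))"
    and "j \<le> multiplicity p n"
    and "x \<ge> 0"
  shows "phi_j p n a vLp j x =
    (INF jh \<in> {(j0, h). j0 \<le> j \<and> a h \<noteq> 0}.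
        ereal (real (snd jh)) + vL_nat p vLp ((snd jh + n) choose (p ^ fst jh))
        + ereal (real (p ^ fst jh) * x))"
proof -
  note p = assms(1) and a0 = assms(3) and jnu = assms(5) and x = assms(6)
  define nu where "nu = multiplicity p n"
  have v: "0 \<le> vLp" using assms(4) by auto
  define f where "f = (\<lambda>j0. insep_index p n a vLp j0 + ereal (real (p ^ j0) * x))"
  define T where "T = (\<lambda>jh::nat\<times>nat. ereal (real (snd jh)) + vL_nat p vLp ((snd jh + n) choose (p ^ fst jh))
        + ereal (real (p ^ fst jh) * x))"
  have phi: "phi_j p n a vLp j x = Min (f ` {..j})" unfolding phi_j_def f_def by simp
  have fin: "finite (f ` {..j})" by simp
  have ne: "f ` {..j} \<noteq> {}" by simp
  have Ile: "insep_index p n a vLp j0 \<le> itilde p n a t + ereal (real (t - j0)) * vLp"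
    if "j0 \<le> t" "t \<le> nu" for j0 t
  proof -
    have "ind_aux p n a vLp (nu - j0) \<le> itilde p n a (multiplicity p n - (nu - j0) + (t - j0))
       + ereal (real (t - j0)) * vLp"
      using that by (intro ind_A[OF v]) (auto simp: nu_def)
    moreover have "multiplicity p n - (nu - j0) + (t - j0) = t" using that by (simp add: nu_def)
    ultimately show ?thesis unfolding insep_index_def nu_def by simp
  qed
  have itnu: "itilde p n a nu \<le> ereal (real h)" for h
  proof -
    have "itilde p n a nu \<le> ereal (real 0)" using a0 by (intro it_le) (simp add: nu_def)
    thus ?thesis by (simp add: order_trans)
  qed
  have dir1: "Min (f ` {..j}) \<le> T (j0, h)" if "j0 \<le> j" "a h \<noteq> 0" for j0 h
  proof -
    define s where "s = multiplicity p (h + n)"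
    have hn: "h + n > 0" using assms(2) by simp
    show ?thesis
    proof (cases "s < j0")
      case True
      have "Min (f ` {..j}) \<le> f s" using True that by (intro Min_le) auto
      also have "f s \<le> T (j0, h)"
      proof -
        have "insep_index p n a vLp s \<le> itilde p n a s + ereal (real (s - s)) * vLp"
          using True that jnu by (intro Ile) (auto simp: nu_def)
        also have "\<dots> \<le> ereal (real h)" using it_le[of p h n s a] that s_def by simp
        also have "\<dots> \<le> ereal (real h) + vL_nat p vLp ((h + n) choose (p ^ j0))"
          using vL_nn[OF v] by (simp add: add_increasing2)
        finally have A: "insep_index p n a vLp s \<le> ereal (real h) + vL_nat p vLp ((h + n) choose (p ^ j0))" .
        have B: "ereal (real (p ^ s) * x) \<le> ereal (real (p ^ j0) * x)"
          using True by (intro pow_x_mono[OF p x]) simp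
        show ?thesis unfolding f_def T_def using add_mono[OF A B] by simp
      qed
      finally show ?thesis .
    next
      case False
      define t where "t = min s nu"
      have "Min (f ` {..j}) \<le> f j0" using that by (intro Min_le) auto
      also have "f j0 \<le> T (j0, h)"
      proof -
        have "insep_index p n a vLp j0 \<le> itilde p n a t + ereal (real (t - j0)) * vLp"
          using False that jnu by (intro Ile) (auto simp: nu_def t_def)
        also have "\<dots> \<le> ereal (real h) + ereal (real (s - j0)) * vLp"
        proof (rule add_mono)
          show "itilde p n a t \<le> ereal (real h)"
          proof (cases "s \<le> nu")
            case True thus ?thesis using it_le[of p h n s a] that s_def t_def by simp
          next
            case False thus ?thesis using itnu t_def by simp
          qed
          show "ereal (real (t - j0)) * vLp \<le> ereal (real (s - j0)) * vLp"
            by (rule M_mono[OF v]) (simp add: t_def)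
        qed
        also have "\<dots> = ereal (real h) + vL_nat p vLp ((h + n) choose (p ^ j0))"
          using vL_kummer[OF p _ hn, of j0 vLp] False s_def by simp
        finally show ?thesis unfolding f_def T_def by (simp add: add_right_mono)
      qed
      finally show ?thesis .
    qed
  qed
  have dir2: "(INF jh \<in> {(j0, h). j0 \<le> j \<and> a h \<noteq> 0}. T jh) \<le> f j0" if j0j: "j0 \<le> j" for j0
  proof -
    have "ind_aux p n a vLp (nu - j0) = \<infinity> \<or>
    (\<exists>h d. d \<le> nu - j0 \<and> a h \<noteq> 0 \<and> multiplicity p (h+n) \<le> multiplicity p n - (nu - j0) + d
       \<and> ereal (real h) + ereal (real d) * vLp \<le> ind_aux p n a vLp (nu - j0))"
      by (rule ind_B[where p=p and n=n and a=a and vLp=vLp, OF v a0]) (simp add: nu_def)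
    thus ?thesis
    proof
      assume "ind_aux p n a vLp (nu - j0) = \<infinity>"
      hence "f j0 = \<infinity>" unfolding f_def insep_index_def nu_def by simp
      thus ?thesis by simp
    next
      assume ex: "\<exists>h d. d \<le> nu - j0 \<and> a h \<noteq> 0 \<and> multiplicity p (h+n) \<le> multiplicity p n - (nu - j0) + d
       \<and> ereal (real h) + ereal (real d) * vLp \<le> ind_aux p n a vLp (nu - j0)"
      have e: "multiplicity p n - (multiplicity p n - j0) = j0" using j0j jnu by simp
      from ex obtain h d where hd: "a h \<noteq> 0" "multiplicity p (h+n) \<le> j0 + d"
        "ereal (real h) + ereal (real d) * vLp \<le> insep_index p n a vLp j0"
        using ex unfolding nu_def e insep_index_def by blast
      define s where "s = multiplicity p (h + n)"
      have hn: "h + n > 0" using assms(2) by simp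
      show ?thesis
      proof (cases "s < j0")
        case True
        have "(INF jh \<in> {(j0, h). j0 \<le> j \<and> a h \<noteq> 0}. T jh) \<le> T (s, h)"
          using True j0j hd by (intro INF_lower) auto
        also have "T (s, h) = ereal (real h) + ereal (real (p ^ s) * x)"
          unfolding T_def using vL_kummer[OF p _ hn, of s vLp] s_def by simp
        also have "\<dots> \<le> f j0"
        proof -
          have "ereal (real h) \<le> insep_index p n a vLp j0"
            using hd(3) M_nn[OF v, of d] by (meson add_increasing2 order_trans ereal_le_add_self)
          moreover have "ereal (real (p ^ s) * x) \<le> ereal (real (p ^ j0) * x)"
            using True by (intro pow_x_mono[OF p x]) simp
          ultimately show ?thesis unfolding f_def by (rule add_mono)
        qed
        finally show ?thesis .
      next
        case False
        have "(INF jh \<in> {(j0, h). j0 \<le> j \<and> a h \<noteq> 0}. T jh) \<le> T (j0, h)"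
          using j0j hd by (intro INF_lower) auto
        also have "T (j0, h) = ereal (real h) + ereal (real (s - j0)) * vLp + ereal (real (p ^ j0) * x)"
          unfolding T_def using vL_kummer[OF p _ hn, of j0 vLp] s_def False by simp
        also have "\<dots> \<le> f j0"
        proof -
          have "ereal (real (s - j0)) * vLp \<le> ereal (real d) * vLp"
            using hd(2) s_def by (intro M_mono[OF v]) simp
          hence "ereal (real h) + ereal (real (s - j0)) * vLp \<le> insep_index p n a vLp j0"
            using hd(3) by (meson add_left_mono order_trans)
          thus ?thesis unfolding f_def by (rule add_right_mono)
        qed
        finally show ?thesis .
      qed
    qed
  qed
  show ?thesis unfolding phi T_def[symmetric]
  proof (rule antisym)
    show "Min (f ` {..j}) \<le> (INF jh \<in> {(j0, h). j0 \<le> j \<and> a h \<noteq> 0}. T jh)"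
      by (rule INF_greatest) (auto intro: dir1)
    have "Min (f ` {..j}) \<in> f ` {..j}" using fin ne by (rule Min_in)
    then obtain j0 where "j0 \<le> j" "Min (f ` {..j}) = f j0" by (metis atMost_iff imageE)
    thus "(INF jh \<in> {(j0, h). j0 \<le> j \<and> a h \<noteq> 0}. T jh) \<le> Min (f ` {..j})"
      using dir2 by simp
  qed
qed

end
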